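(* For every pair $s,t\in\{0,1\}^{<\mathbb N}$ that are independent (neither is a prefix of the other), the element $y_sy_t^{-1}$ lies in $S$.
   Context: Let $\{0,1\}^{\mathbb N}$ be the Cantor set of infinite binary sequences and $\{0,1\}^{<\mathbb N}$ the set of finite binary words, including the empty word; juxtaposition denotes concatenation, $0^n,1^n$ denote constant words. Homeomorphisms act on the right. Define $x,y$ by $00\eta\cdot x=0\eta$, $01\eta\cdot x=10\eta$, $1\eta\cdot x=11\eta$, and recursively $00\eta\cdot y=0(\eta\cdot y)$, $01\eta\cdot y=10(\eta\cdot y^{-1})$, $1\eta\cdot y=11(\eta\cdot y)$; $x_s$ (resp. $y_s$) sends $s\eta\mapsto s(\eta\cdot x)$ (resp. $s(\eta\cdot y)$) and fixes sequences not beginning with $s$. For $n\ge0$, $p_n$ is the homeomorphism with $1^k0\eta\cdot p_n=1^{k+1}0\eta$ for $0\le k\le n-1$, $1^n0\eta\cdot p_n=1^{n+1}\eta$, and $1^{n+1}\eta\cdot p_n=0\eta$. $T$ is the group generated by all $x_s$ and all $p_n$, and $S=\langle T,\ y_{10}y_{110}^{-1}\rangle$. *)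

theory Defs
  imports Main "HOL-Library.Sublist"
begin

text \<open>Points of the Cantor set are infinite binary sequences \<open>nat \<Rightarrow> bool\<close>
  (False = 0, True = 1); finite words are \<open>bool list\<close>.  Homeomorphisms act on the
  right: \<open>\<eta> \<cdot> g\<close> is rendered as the function application \<open>g \<eta>\<close>, so the
  group product \<open>g h\<close> (first g, then h) is the function \<open>h \<circ> g\<close>.\<close>

type_synonym cantor = "nat \<Rightarrow> bool"

definition pre :: "bool list \<Rightarrow> cantor \<Rightarrow> cantor" where
  "pre s \<eta> = (\<lambda>i. if i < length s then s ! i else \<eta> (i - length s))"

definition sdrop :: "nat \<Rightarrow> cantor \<Rightarrow> cantor" where
  "sdrop n \<xi> = (\<lambda>i. \<xi> (i + n))"

definition begins :: "bool list \<Rightarrow> cantor \<Rightarrow> bool" where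
  "begins s \<xi> \<longleftrightarrow> (\<forall>i < length s. \<xi> i = s ! i)"

definition xmap :: "cantor \<Rightarrow> cantor" where
  "xmap \<xi> = (if \<not> \<xi> 0 \<and> \<not> \<xi> 1 then pre [False] (sdrop 2 \<xi>)
             else if \<not> \<xi> 0 then pre [True, False] (sdrop 2 \<xi>)
             else pre [True, True] (sdrop 1 \<xi>))"

text \<open>The map y and its inverse, given bitwise by the recursive equations
  00\<eta>.y = 0(\<eta>.y), 01\<eta>.y = 10(\<eta>.y\<inverse>), 1\<eta>.y = 11(\<eta>.y) and the derived equations
  for the inverse 0\<eta>.y\<inverse> = 00(\<eta>.y\<inverse>), 10\<eta>.y\<inverse> = 01(\<eta>.y), 11\<eta>.y\<inverse> = 1(\<eta>.y\<inverse>).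
  \<open>ymap False k \<xi>\<close> is bit k of \<xi>.y, \<open>ymap True k \<xi>\<close> is bit k of \<xi>.y\<inverse>.\<close>
fun ymap :: "bool \<Rightarrow> nat \<Rightarrow> cantor \<Rightarrow> bool" where
  "ymap b k f = (if \<not> b then
      (if \<not> f 0 \<and> \<not> f 1 then (case k of 0 \<Rightarrow> False | Suc j \<Rightarrow> ymap False j (sdrop 2 f))
       else if \<not> f 0 then (case k of 0 \<Rightarrow> True | Suc 0 \<Rightarrow> False | Suc (Suc j) \<Rightarrow> ymap True j (sdrop 2 f))
       else (case k of 0 \<Rightarrow> True | Suc 0 \<Rightarrow> True | Suc (Suc j) \<Rightarrow> ymap False j (sdrop 1 f)))
    else
      (if \<not> f 0 then (case k of 0 \<Rightarrow> False | Suc 0 \<Rightarrow> False | Suc (Suc j) \<Rightarrow> ymap True j (sdrop 1 f))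
       else if \<not> f 1 then (case k of 0 \<Rightarrow> False | Suc 0 \<Rightarrow> True | Suc (Suc j) \<Rightarrow> ymap False j (sdrop 2 f))
       else (case k of 0 \<Rightarrow> True | Suc j \<Rightarrow> ymap True j (sdrop 2 f))))"

definition ymp :: "cantor \<Rightarrow> cantor" where
  "ymp \<xi> = (\<lambda>k. ymap False k \<xi>)"

definition loc :: "bool list \<Rightarrow> (cantor \<Rightarrow> cantor) \<Rightarrow> cantor \<Rightarrow> cantor" where
  "loc s g \<xi> = (if begins s \<xi> then pre s (g (sdrop (length s) \<xi>)) else \<xi>)"

definition x_at :: "bool list \<Rightarrow> cantor \<Rightarrow> cantor" where
  "x_at s = loc s xmap"

definition y_at :: "bool list \<Rightarrow> cantor \<Rightarrow> cantor" where
  "y_at s = loc s ymp"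

text \<open>p_n: 1^k0\<eta> -> 1^(k+1)0\<eta> (k<n), 1^n0\<eta> -> 1^(n+1)\<eta>, 1^(n+1)\<eta> -> 0\<eta>.\<close>
definition p_map :: "nat \<Rightarrow> cantor \<Rightarrow> cantor" where
  "p_map n \<xi> = (if \<forall>i \<le> n. \<xi> i then pre [False] (sdrop (Suc n) \<xi>)
     else (let k = (LEAST i. \<not> \<xi> i) in
       if k < n then pre (replicate (Suc k) True @ [False]) (sdrop (Suc k) \<xi>)
       else pre (replicate (Suc n) True) (sdrop (Suc n) \<xi>)))"

inductive_set gen_group :: "(cantor \<Rightarrow> cantor) set \<Rightarrow> (cantor \<Rightarrow> cantor) set"
  for A where
    gen_id: "id \<in> gen_group A"
  | gen_base: "g \<in> A \<Longrightarrow> g \<in> gen_group A"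
  | gen_comp: "g \<in> gen_group A \<Longrightarrow> h \<in> gen_group A \<Longrightarrow> h \<circ> g \<in> gen_group A"
  | gen_inv: "g \<in> gen_group A \<Longrightarrow> inv g \<in> gen_group A"

definition T_gens :: "(cantor \<Rightarrow> cantor) set" where
  "T_gens = range x_at \<union> range p_map"

text \<open>S = < T, y_10 y_110\<inverse> >; the product y_10 y_110\<inverse> (right action) is
  the function \<open>inv (y_at [1,1,0]) \<circ> y_at [1,0]\<close>.\<close>
definition S_group :: "(cantor \<Rightarrow> cantor) set" where
  "S_group = gen_group (T_gens \<union> {inv (y_at [True, True, False]) \<circ> y_at [True, False]})"

definition independent :: "bool list \<Rightarrow> bool list \<Rightarrow> bool" where
  "independent s t \<longleftrightarrow> \<not> prefix s t \<and> \<not> prefix t s"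

end

theory Submission
  imports Defs
begin

declare ymap.simps[simp del]

lemma pre_Nil[simp]: "pre [] \<eta> = \<eta>"
  by (simp add: pre_def)

lemma pre_pre[simp]: "pre a (pre b \<eta>) = pre (a @ b) \<eta>"
  by (auto simp: pre_def nth_append fun_eq_iff)

lemma pre_Cons0[simp]: "pre (a # v) \<eta> 0 = a"
  by (simp add: pre_def)
lemma pre_Cons1[simp]: "pre (a # b # v) \<eta> (Suc 0) = b"
  by (simp add: pre_def)
lemma pre_Cons_Suc[simp]: "pre (a # v) \<eta> (Suc i) = pre v \<eta> i"
  by (simp add: pre_def)

lemma sdrop_pre[simp]: "sdrop (length s) (pre s \<eta>) = \<eta>"
  by (simp add: sdrop_def pre_def fun_eq_iff)

lemma sdrop1[simp]: "sdrop (Suc 0) (pre (a # v) \<eta>) = pre v \<eta>"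
  by (simp add: sdrop_def pre_def fun_eq_iff)
lemma sdrop2[simp]: "sdrop 2 (pre (a # b # v) \<eta>) = pre v \<eta>"
  by (simp add: sdrop_def pre_def fun_eq_iff numeral_2_eq_2)

lemma begins_pre[simp]: "begins s (pre (s @ z) \<eta>)"
  by (simp add: begins_def pre_def nth_append)

lemma pre_sdrop: "begins s \<xi> \<Longrightarrow> pre s (sdrop (length s) \<xi>) = \<xi>"
  by (auto simp: begins_def pre_def sdrop_def fun_eq_iff)

lemma pre_inj: "pre s \<eta> = pre s \<zeta> \<Longrightarrow> \<eta> = \<zeta>"
  by (metis sdrop_pre)

lemma begins_prefix: "begins u (pre w \<eta>) \<Longrightarrow> prefix u w \<or> prefix w u"
proof (induction u arbitrary: w)
  case Nil then show ?case by simp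
next
  case (Cons a u)
  show ?case
  proof (cases w)
    case Nil then show ?thesis by simp
  next
    case (Cons b w')
    from Cons.prems have "a = b" using \<open>w = b # w'\<close>
      by (auto simp: begins_def dest: spec[of _ 0])
    moreover have "begins u (pre w' \<eta>)" unfolding begins_def
    proof (intro allI impI)
      fix i assume "i < length u"
      then show "pre w' \<eta> i = u ! i"
        using Cons.prems[unfolded begins_def, rule_format, of "Suc i"] \<open>w = b # w'\<close> by simp
    qed
    ultimately show ?thesis using Cons.IH \<open>w = b # w'\<close> by auto
  qed
qed

definition indep :: "bool list \<Rightarrow> bool list \<Rightarrow> bool" where
  "indep u w \<longleftrightarrow> \<not> prefix u w \<and> \<not> prefix w u"

lemma not_begins: "indep u w \<Longrightarrow> \<not> begins u (pre w \<eta>)"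
  using begins_prefix indep_def by blast

lemma decomp1: "\<xi> = pre [\<xi> 0] (sdrop 1 \<xi>)"
  by (rule ext) (auto simp: pre_def sdrop_def split: nat.split)
lemma decomp2: "\<xi> = pre [\<xi> 0, \<xi> 1] (sdrop 2 \<xi>)"
  by (rule ext) (auto simp: pre_def sdrop_def nth_Cons split: nat.split)

definition yinv :: "cantor \<Rightarrow> cantor" where
  "yinv \<xi> = (\<lambda>k. ymap True k \<xi>)"

lemma ymp_FF[simp]: "ymp (pre (False # False # v) \<eta>) = pre [False] (ymp (pre v \<eta>))"
  unfolding ymp_def by (rule ext, subst ymap.simps) (auto split: nat.split)
lemma ymp_FT[simp]: "ymp (pre (False # True # v) \<eta>) = pre [True, False] (yinv (pre v \<eta>))"
  unfolding ymp_def yinv_def by (rule ext, subst ymap.simps) (auto split: nat.split)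
lemma ymp_T[simp]: "ymp (pre (True # v) \<eta>) = pre [True, True] (ymp (pre v \<eta>))"
  unfolding ymp_def by (rule ext, subst ymap.simps) (auto split: nat.split)
lemma yinv_F[simp]: "yinv (pre (False # v) \<eta>) = pre [False, False] (yinv (pre v \<eta>))"
  unfolding yinv_def by (rule ext, subst ymap.simps) (auto split: nat.split)
lemma yinv_TF[simp]: "yinv (pre (True # False # v) \<eta>) = pre [False, True] (ymp (pre v \<eta>))"
  unfolding ymp_def yinv_def by (rule ext, subst ymap.simps) (auto split: nat.split)
lemma yinv_TT[simp]: "yinv (pre (True # True # v) \<eta>) = pre [True] (yinv (pre v \<eta>))"
  unfolding yinv_def by (rule ext, subst ymap.simps) (auto split: nat.split)

lemma nat3: "(k = 0 \<Longrightarrow> P) \<Longrightarrow> (k = Suc 0 \<Longrightarrow> P) \<Longrightarrow> (\<And>j. k = Suc (Suc j) \<Longrightarrow> P) \<Longrightarrow> P"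
  by (metis nat.exhaust)

lemma cases3a: "(\<exists>\<eta>. \<xi> = pre [False] \<eta>) \<or> (\<exists>\<eta>. \<xi> = pre [True, False] \<eta>) \<or> (\<exists>\<eta>. \<xi> = pre [True, True] \<eta>)"
  by (metis decomp1 decomp2 pre_Cons0)
lemma cases3b: "(\<exists>\<eta>. \<xi> = pre [False, False] \<eta>) \<or> (\<exists>\<eta>. \<xi> = pre [False, True] \<eta>) \<or> (\<exists>\<eta>. \<xi> = pre [True] \<eta>)"
  by (metis decomp1 decomp2 pre_Cons0)

lemma y_inv_aux: "\<forall>\<xi>. ymp (yinv \<xi>) k = \<xi> k \<and> yinv (ymp \<xi>) k = \<xi> k"
proof (induction k rule: less_induct)
  case (less k)
  show ?case
  proof
    fix \<xi> :: cantor
    have A: "ymp (yinv \<xi>) k = \<xi> k"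
      using cases3a[of \<xi>]
    proof (elim disjE exE)
      fix \<eta> assume "\<xi> = pre [False] \<eta>"
      then show ?thesis using less by (cases k rule: nat3) auto
    next
      fix \<eta> assume "\<xi> = pre [True, False] \<eta>"
      then show ?thesis using less by (cases k rule: nat3) auto
    next
      fix \<eta> assume "\<xi> = pre [True, True] \<eta>"
      then show ?thesis using less by (cases k rule: nat3) auto
    qed
    have B: "yinv (ymp \<xi>) k = \<xi> k"
      using cases3b[of \<xi>]
    proof (elim disjE exE)
      fix \<eta> assume "\<xi> = pre [False, False] \<eta>"
      then show ?thesis using less by (cases k rule: nat3) auto
    next
      fix \<eta> assume "\<xi> = pre [False, True] \<eta>"
      then show ?thesis using less by (cases k rule: nat3) auto
    next
      fix \<eta> assume "\<xi> = pre [True] \<eta>"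
      then show ?thesis using less by (cases k rule: nat3) auto
    qed
    show "ymp (yinv \<xi>) k = \<xi> k \<and> yinv (ymp \<xi>) k = \<xi> k" using A B by simp
  qed
qed

lemma ymp_yinv: "ymp \<circ> yinv = id" and yinv_ymp: "yinv \<circ> ymp = id"
  using y_inv_aux by (auto simp: fun_eq_iff)

lemma sdrop1'[simp]: "sdrop 1 (pre (a # v) \<eta>) = pre v \<eta>"
  using sdrop1 by simp

lemma bij_y: "bij ymp" and inv_ymp: "inv ymp = yinv"
  using ymp_yinv yinv_ymp by (auto intro: o_bij inv_unique_comp)

lemma xmap_FF[simp]: "xmap (pre (False # False # v) \<eta>) = pre (False # v) \<eta>"
  by (simp add: xmap_def)
lemma xmap_FT[simp]: "xmap (pre (False # True # v) \<eta>) = pre (True # False # v) \<eta>"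
  by (simp add: xmap_def)
lemma xmap_T[simp]: "xmap (pre (True # v) \<eta>) = pre (True # True # v) \<eta>"
  by (simp add: xmap_def)

definition xinv :: "cantor \<Rightarrow> cantor" where
  "xinv \<xi> = (if \<not> \<xi> 0 then pre [False, False] (sdrop 1 \<xi>)
     else if \<not> \<xi> 1 then pre [False, True] (sdrop 2 \<xi>) else pre [True] (sdrop 2 \<xi>))"

lemma xinv_F[simp]: "xinv (pre (False # v) \<eta>) = pre (False # False # v) \<eta>"
  by (simp add: xinv_def)
lemma xinv_TF[simp]: "xinv (pre (True # False # v) \<eta>) = pre (False # True # v) \<eta>"
  by (simp add: xinv_def)
lemma xinv_TT[simp]: "xinv (pre (True # True # v) \<eta>) = pre (True # v) \<eta>"
  by (simp add: xinv_def)

lemma xmap_xinv: "xmap \<circ> xinv = id"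
proof
  fix \<xi> show "(xmap \<circ> xinv) \<xi> = id \<xi>" using cases3a[of \<xi>] by auto
qed
lemma xinv_xmap: "xinv \<circ> xmap = id"
proof
  fix \<xi> show "(xinv \<circ> xmap) \<xi> = id \<xi>" using cases3b[of \<xi>] by auto
qed

lemma p0_pre[simp]: "p_map 0 (pre (b # v) \<eta>) = pre ((\<not> b) # v) \<eta>"
proof (cases b)
  case True
  have "\<forall>i\<le>(0::nat). pre (True # v) \<eta> i" by auto
  then show ?thesis using True by (simp add: p_map_def)
next
  case False
  have c: "\<not> (\<forall>i\<le>(0::nat). pre (False # v) \<eta> i)" by auto
  show ?thesis using False unfolding p_map_def if_not_P[OF c] by (auto simp: Let_def)
qed

lemma p0_p0: "p_map 0 \<circ> p_map 0 = id"
proof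
  fix \<xi> :: cantor
  have e: "\<xi> = pre [\<xi> 0] (sdrop 1 \<xi>)" by (rule decomp1)
  obtain b \<eta> where "\<xi> = pre [b] \<eta>" using e by blast
  then show "(p_map 0 \<circ> p_map 0) \<xi> = id \<xi>" by simp
qed

lemma bij_p0: "bij (p_map 0)" using p0_p0 by (auto intro: o_bij)

lemma sdrop_pre_app: "sdrop (length w) (pre (w @ z) \<eta>) = pre z \<eta>"
  using sdrop_pre[of w "pre z \<eta>"] by simp

lemma loc_pre: "prefix w v \<Longrightarrow> loc w g (pre v \<eta>) = pre w (g (pre (drop (length w) v) \<eta>))"
  by (auto simp: loc_def prefix_def sdrop_pre_app)

lemma loc_indep: "indep w v \<Longrightarrow> loc w g (pre v \<eta>) = pre v \<eta>"
  by (simp add: loc_def not_begins)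

lemma loc_comp: "loc s g \<circ> loc s h = loc s (g \<circ> h)"
proof
  fix \<xi>
  show "(loc s g \<circ> loc s h) \<xi> = loc s (g \<circ> h) \<xi>"
  proof (cases "begins s \<xi>")
    case True
    then have "\<xi> = pre s (sdrop (length s) \<xi>)" by (simp add: pre_sdrop)
    then obtain \<eta> where "\<xi> = pre s \<eta>" by metis
    then show ?thesis using begins_pre[of s "[]"] by (simp add: loc_def)
  next
    case False then show ?thesis by (simp add: loc_def)
  qed
qed

lemma loc_id: "loc s id = id"
  by (auto simp: loc_def fun_eq_iff pre_sdrop)

lemma loc_inv: "g \<circ> h = id \<Longrightarrow> h \<circ> g = id \<Longrightarrow> bij (loc s g) \<and> inv (loc s g) = loc s h"
  by (metis loc_comp loc_id o_bij inv_unique_comp)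

lemma y_bij: "bij (y_at s)" and inv_y: "inv (y_at s) = loc s yinv"
  using loc_inv[OF ymp_yinv yinv_ymp] by (auto simp: y_at_def)

lemma x_bij: "bij (x_at s)" and inv_x: "inv (x_at s) = loc s xinv"
  using loc_inv[OF xmap_xinv xinv_xmap] by (auto simp: x_at_def)

lemma x_S: "x_at u \<in> S_group"
  by (auto simp: S_group_def T_gens_def intro: gen_base)
lemma xi_S: "loc u xinv \<in> S_group"
  using x_S[of u] inv_x[of u] by (metis S_group_def gen_inv)
lemma p_S: "p_map 0 \<in> S_group"
  by (auto simp: S_group_def T_gens_def intro: gen_base)
lemma S_comp: "g \<in> S_group \<Longrightarrow> h \<in> S_group \<Longrightarrow> h \<circ> g \<in> S_group"
  by (simp add: S_group_def gen_comp)
lemma S_inv: "g \<in> S_group \<Longrightarrow> inv g \<in> S_group"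
  by (simp add: S_group_def gen_inv)

definition Q :: "bool list \<Rightarrow> bool list \<Rightarrow> bool" where
  "Q s t \<longleftrightarrow> loc t yinv \<circ> loc s ymp \<in> S_group"

lemma Q_iff: "Q s t \<longleftrightarrow> inv (y_at t) \<circ> y_at s \<in> S_group"
  by (simp only: Q_def inv_y) (simp add: y_at_def)

lemma Q_base: "Q [True, False] [True, True, False]"
  unfolding Q_iff by (auto simp: S_group_def intro: gen_base)

lemma Q_sym: "Q s t \<Longrightarrow> Q t s"
proof -
  assume "Q s t"
  then have "inv (loc t yinv \<circ> loc s ymp) \<in> S_group" unfolding Q_def by (rule S_inv)
  moreover have "inv (loc t yinv \<circ> loc s ymp) = loc s yinv \<circ> loc t ymp"
  proof (rule inv_unique_comp)
    show "(loc t yinv \<circ> loc s ymp) \<circ> (loc s yinv \<circ> loc t ymp) = id"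
      by (simp add: comp_assoc[symmetric]) (simp add: comp_assoc loc_comp ymp_yinv yinv_ymp loc_id)
    show "(loc s yinv \<circ> loc t ymp) \<circ> (loc t yinv \<circ> loc s ymp) = id"
      by (simp add: comp_assoc[symmetric]) (simp add: comp_assoc loc_comp ymp_yinv yinv_ymp loc_id)
  qed
  ultimately show "Q t s" by (simp add: Q_def)
qed

lemma Q_trans: "Q s u \<Longrightarrow> Q u t \<Longrightarrow> Q s t"
proof -
  assume "Q s u" "Q u t"
  then have "(loc t yinv \<circ> loc u ymp) \<circ> (loc u yinv \<circ> loc s ymp) \<in> S_group"
    unfolding Q_def by (rule S_comp)
  moreover have "(loc t yinv \<circ> loc u ymp) \<circ> (loc u yinv \<circ> loc s ymp) = loc t yinv \<circ> loc s ymp"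
    by (simp add: comp_assoc[symmetric]) (simp add: comp_assoc loc_comp ymp_yinv loc_id)
  ultimately show "Q s t" by (simp add: Q_def)
qed

lemma conj_loc:
  assumes "inj g" and m: "\<And>\<eta>. g (pre a \<eta>) = pre a' \<eta>"
  shows "inv g \<circ> loc a' h \<circ> g = loc a h"
proof
  fix \<xi>
  show "(inv g \<circ> loc a' h \<circ> g) \<xi> = loc a h \<xi>"
  proof (cases "begins a \<xi>")
    case True
    then have "\<xi> = pre a (sdrop (length a) \<xi>)" by (simp add: pre_sdrop)
    then obtain \<eta> where e: "\<xi> = pre a \<eta>" by metis
    have "loc a' h (g \<xi>) = g (pre a (h \<eta>))"
      using e m begins_pre[of a' "[]"] begins_pre[of a "[]"] by (simp add: loc_def)
    then show ?thesis using e begins_pre[of a "[]"] \<open>inj g\<close> by (simp add: loc_def)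
  next
    case False
    have "\<not> begins a' (g \<xi>)"
    proof
      assume "begins a' (g \<xi>)"
      then have "g \<xi> = pre a' (sdrop (length a') (g \<xi>))" by (simp add: pre_sdrop)
      also have "\<dots> = g (pre a (sdrop (length a') (g \<xi>)))" by (simp add: m)
      finally have "\<xi> = pre a (sdrop (length a') (g \<xi>))" using \<open>inj g\<close> by (simp add: inj_eq)
      then show False using False begins_pre[of a "[]"] by (metis append_Nil2)
    qed
    then show ?thesis using False \<open>inj g\<close> by (simp add: loc_def)
  qed
qed

lemma Q_conj:
  assumes "bij g" "g \<in> S_group" "\<And>\<eta>. g (pre s \<eta>) = pre s' \<eta>" "\<And>\<eta>. g (pre t \<eta>) = pre t' \<eta>"
    and "Q s' t'"
  shows "Q s t"
proof -
  have i: "inj g" using assms(1) bij_is_inj by blast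
  have gi: "g \<circ> inv g = id" using assms(1) bij_is_surj surj_iff by blast
  have 1: "loc s ymp = inv g \<circ> loc s' ymp \<circ> g" using conj_loc[OF i assms(3)] by simp
  have 2: "loc t yinv = inv g \<circ> loc t' yinv \<circ> g" using conj_loc[OF i assms(4)] by simp
  have "loc t yinv \<circ> loc s ymp = inv g \<circ> (loc t' yinv \<circ> loc s' ymp) \<circ> g"
    unfolding 1 2 by (simp add: comp_assoc[symmetric]) (simp add: comp_assoc gi)
  moreover have "inv g \<circ> (loc t' yinv \<circ> loc s' ymp) \<circ> g \<in> S_group"
    using S_comp[OF assms(2) S_comp[OF assms(5)[unfolded Q_def] S_inv[OF assms(2)]]] by (simp add: comp_assoc)
  ultimately show ?thesis by (simp add: Q_def)
qed


definition xw :: "bool list \<Rightarrow> bool list \<Rightarrow> bool list option" where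
  "xw u w = (if indep u w then Some w
    else if prefix (u @ [False, False]) w then Some (u @ [False] @ drop (length u + 2) w)
    else if prefix (u @ [False, True]) w then Some (u @ [True, False] @ drop (length u + 2) w)
    else if prefix (u @ [True]) w then Some (u @ [True, True] @ drop (length u + 1) w)
    else None)"

definition xiw :: "bool list \<Rightarrow> bool list \<Rightarrow> bool list option" where
  "xiw u w = (if indep u w then Some w
    else if prefix (u @ [False]) w then Some (u @ [False, False] @ drop (length u + 1) w)
    else if prefix (u @ [True, False]) w then Some (u @ [False, True] @ drop (length u + 2) w)
    else if prefix (u @ [True, True]) w then Some (u @ [True] @ drop (length u + 2) w)
    else None)"

definition pw :: "bool list \<Rightarrow> bool list option" where
  "pw w = (case w of [] \<Rightarrow> None | b # z \<Rightarrow> Some ((\<not> b) # z))"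

lemma xw_map: "xw u w = Some w' \<Longrightarrow> x_at u (pre w \<eta>) = pre w' \<eta>"
  unfolding xw_def x_at_def
  by (auto simp: loc_indep loc_pre prefix_def split: if_splits)

lemma xiw_map: "xiw u w = Some w' \<Longrightarrow> loc u xinv (pre w \<eta>) = pre w' \<eta>"
  unfolding xiw_def
  by (auto simp: loc_indep loc_pre prefix_def split: if_splits)

lemma pw_map: "pw w = Some w' \<Longrightarrow> p_map 0 (pre w \<eta>) = pre w' \<eta>"
  unfolding pw_def by (auto split: list.splits)

lemma move_x: "xw u s = Some s' \<Longrightarrow> xw u t = Some t' \<Longrightarrow> Q s' t' \<Longrightarrow> Q s t"
  by (rule Q_conj[OF x_bij x_S xw_map xw_map])

lemma xi_bij: "bij (loc u xinv)"
  using loc_inv[OF xinv_xmap xmap_xinv] by blast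

lemma move_xi: "xiw u s = Some s' \<Longrightarrow> xiw u t = Some t' \<Longrightarrow> Q s' t' \<Longrightarrow> Q s t"
  by (rule Q_conj[OF xi_bij xi_S xiw_map xiw_map])

lemma move_p: "pw s = Some s' \<Longrightarrow> pw t = Some t' \<Longrightarrow> Q s' t' \<Longrightarrow> Q s t"
  by (rule Q_conj[OF bij_p0 p_S pw_map pw_map])

lemma cases4: "(\<exists>\<eta>. \<xi> = pre [False] \<eta>) \<or> (\<exists>\<eta>. \<xi> = pre [True, False] \<eta>)
   \<or> (\<exists>\<eta>. \<xi> = pre [True, True, False] \<eta>) \<or> (\<exists>\<eta>. \<xi> = pre [True, True, True] \<eta>)"
proof -
  have "(\<exists>\<eta>. \<xi> = pre [True, True] \<eta>) \<Longrightarrow> ?thesis"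
  proof -
    assume "\<exists>\<eta>. \<xi> = pre [True, True] \<eta>"
    then obtain \<eta> where e: "\<xi> = pre [True, True] \<eta>" by blast
    have "\<eta> = pre [\<eta> 0] (sdrop 1 \<eta>)" by (rule decomp1)
    then obtain b \<zeta> where "\<eta> = pre [b] \<zeta>" by blast
    then show ?thesis using e by (cases b) auto
  qed
  then show ?thesis using cases3a[of \<xi>] by blast
qed

lemma yinv_rel: "loc [True] yinv = loc [True] xinv \<circ> loc [True, False] yinv \<circ> loc [True, True, False] ymp \<circ> loc [True, True, True] yinv"
proof
  fix \<xi>
  show "loc [True] yinv \<xi> = (loc [True] xinv \<circ> loc [True, False] yinv \<circ> loc [True, True, False] ymp \<circ> loc [True, True, True] yinv) \<xi>"
    using cases4[of \<xi>] by (elim disjE exE) (simp_all add: loc_pre loc_indep indep_def)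
qed

lemma Q01: "Q [True, True, False] [True, False] \<Longrightarrow> Q [False] [True, True, True] \<Longrightarrow> Q [False] [True]"
proof -
  assume a: "Q [True, True, False] [True, False]" "Q [False] [True, True, True]"
  have "(loc [True, True, True] yinv \<circ> loc [False] ymp) \<in> S_group" using a(2) by (simp add: Q_def)
  then have "(loc [True, False] yinv \<circ> loc [True, True, False] ymp) \<circ> (loc [True, True, True] yinv \<circ> loc [False] ymp) \<in> S_group"
    using a(1) by (simp add: Q_def S_comp)
  then have "loc [True] xinv \<circ> ((loc [True, False] yinv \<circ> loc [True, True, False] ymp) \<circ> (loc [True, True, True] yinv \<circ> loc [False] ymp)) \<in> S_group"
    using xi_S by (rule S_comp)
  then show ?thesis unfolding Q_def yinv_rel by (simp add: comp_assoc)
qed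


definition ok :: "bool list \<Rightarrow> bool list \<Rightarrow> bool" where
  "ok s t \<longleftrightarrow> indep s t \<and> \<not> (s = [False] \<and> t = [True]) \<and> \<not> (s = [True] \<and> t = [False])"

lemma base_1_00:
  assumes "s1 = []" "t1 = [False]" and IH0: "\<And>s t. length s + length t < length (True # s1) + length (False # t1) \<Longrightarrow> ok s t \<Longrightarrow> Q s t"
  shows "Q (True # s1) (False # t1)"
proof -
  have IH: "Q s t" if "length s + length t < 3" "ok s t" for s t
    using IH0[of s t] that assms(1,2) by simp
  have "Q [True, False] [True, True, False]" by (rule Q_base)
  then have "Q [False, False] [False, True, False]" by (rule move_p[rotated 2]) (simp_all add: pw_def)
  then have "Q [False] [True, False, False]" by (rule move_xi[where u="[]", rotated 2]) (simp_all add: xiw_def indep_def)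
  then have "Q [False] [True, False]" by (rule move_xi[where u="[True]", rotated 2]) (simp_all add: xiw_def indep_def)
  then have "Q [True] [False, False]" by (rule move_p[rotated 2]) (simp_all add: pw_def)
  then show ?thesis using assms(1,2) by simp
qed

lemma base_1_01:
  assumes "s1 = []" "t1 = [True]" and IH0: "\<And>s t. length s + length t < length (True # s1) + length (False # t1) \<Longrightarrow> ok s t \<Longrightarrow> Q s t"
  shows "Q (True # s1) (False # t1)"
proof -
  have IH: "Q s t" if "length s + length t < 3" "ok s t" for s t
    using IH0[of s t] that assms(1,2) by simp
  have "Q [True, True, False] [True, False]" by (rule Q_sym[OF Q_base])
  then have "Q [True, False] [False, True]" by (rule move_x[where u="[]", rotated 2]) (simp_all add: xw_def indep_def)
  then have "Q [False, False] [True, True]" by (rule move_p[rotated 2]) (simp_all add: pw_def)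
  then have "Q [False] [True, True, True]" by (rule move_xi[where u="[]", rotated 2]) (simp_all add: xiw_def indep_def)
  then have "Q [False] [True, True]" by (rule move_x[where u="[True]", rotated 2]) (simp_all add: xw_def indep_def)
  then have "Q [True] [False, True]" by (rule move_p[rotated 2]) (simp_all add: pw_def)
  then show ?thesis using assms(1,2) by simp
qed

lemma base_1_001:
  assumes "s1 = []" "t1 = [False, True]" and IH0: "\<And>s t. length s + length t < length (True # s1) + length (False # t1) \<Longrightarrow> ok s t \<Longrightarrow> Q s t"
  shows "Q (True # s1) (False # t1)"
proof -
  have IH: "Q s t" if "length s + length t < 4" "ok s t" for s t
    using IH0[of s t] that assms(1,2) by simp
  have "Q [False] [True, False]" by (rule IH) (simp_all add: ok_def indep_def)
  moreover have "Q [True, False] [True, True, False]" by (rule Q_base)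
  ultimately have "Q [False] [True, True, False]" by (rule Q_trans)
  then have "Q [False] [True, False, True]" by (rule move_x[where u="[True]", rotated 2]) (simp_all add: xw_def indep_def)
  then have "Q [True] [False, False, True]" by (rule move_p[rotated 2]) (simp_all add: pw_def)
  then show ?thesis using assms(1,2) by simp
qed

lemma base_1_010:
  assumes "s1 = []" "t1 = [True, False]" and IH0: "\<And>s t. length s + length t < length (True # s1) + length (False # t1) \<Longrightarrow> ok s t \<Longrightarrow> Q s t"
  shows "Q (True # s1) (False # t1)"
proof -
  have IH: "Q s t" if "length s + length t < 4" "ok s t" for s t
    using IH0[of s t] that assms(1,2) by simp
  have "Q [False] [True, False]" by (rule IH) (simp_all add: ok_def indep_def)
  moreover have "Q [True, False] [True, True, False]" by (rule Q_base)
  ultimately have "Q [False] [True, True, False]" by (rule Q_trans)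
  then have "Q [True] [False, True, False]" by (rule move_p[rotated 2]) (simp_all add: pw_def)
  then show ?thesis using assms(1,2) by simp
qed

lemma base_10_0:
  assumes "s1 = [False]" "t1 = []" and IH0: "\<And>s t. length s + length t < length (True # s1) + length (False # t1) \<Longrightarrow> ok s t \<Longrightarrow> Q s t"
  shows "Q (True # s1) (False # t1)"
proof -
  have IH: "Q s t" if "length s + length t < 3" "ok s t" for s t
    using IH0[of s t] that assms(1,2) by simp
  have "Q [True, True, False] [True, False]" by (rule Q_sym[OF Q_base])
  then have "Q [False, True, False] [False, False]" by (rule move_p[rotated 2]) (simp_all add: pw_def)
  then have "Q [True, False, False] [False]" by (rule move_xi[where u="[]", rotated 2]) (simp_all add: xiw_def indep_def)
  then have "Q [True, False] [False]" by (rule move_xi[where u="[True]", rotated 2]) (simp_all add: xiw_def indep_def)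
  then show ?thesis using assms(1,2) by simp
qed

lemma base_10_00:
  assumes "s1 = [False]" "t1 = [False]" and IH0: "\<And>s t. length s + length t < length (True # s1) + length (False # t1) \<Longrightarrow> ok s t \<Longrightarrow> Q s t"
  shows "Q (True # s1) (False # t1)"
proof -
  have IH: "Q s t" if "length s + length t < 4" "ok s t" for s t
    using IH0[of s t] that assms(1,2) by simp
  have "Q [True, True, False] [True, False]" by (rule Q_sym[OF Q_base])
  moreover have "Q [True, False] [False]" by (rule IH) (simp_all add: ok_def indep_def)
  ultimately have "Q [True, True, False] [False]" by (rule Q_trans)
  then have "Q [True, False] [False, False]" by (rule move_x[where u="[]", rotated 2]) (simp_all add: xw_def indep_def)
  then show ?thesis using assms(1,2) by simp
qed

lemma base_10_01:
  assumes "s1 = [False]" "t1 = [True]" and IH0: "\<And>s t. length s + length t < length (True # s1) + length (False # t1) \<Longrightarrow> ok s t \<Longrightarrow> Q s t"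
  shows "Q (True # s1) (False # t1)"
proof -
  have IH: "Q s t" if "length s + length t < 4" "ok s t" for s t
    using IH0[of s t] that assms(1,2) by simp
  have "Q [True, True, False] [True, False]" by (rule Q_sym[OF Q_base])
  then have "Q [True, False] [False, True]" by (rule move_x[where u="[]", rotated 2]) (simp_all add: xw_def indep_def)
  then show ?thesis using assms(1,2) by simp
qed

lemma base_10_001:
  assumes "s1 = [False]" "t1 = [False, True]" and IH0: "\<And>s t. length s + length t < length (True # s1) + length (False # t1) \<Longrightarrow> ok s t \<Longrightarrow> Q s t"
  shows "Q (True # s1) (False # t1)"
proof -
  have IH: "Q s t" if "length s + length t < 5" "ok s t" for s t
    using IH0[of s t] that assms(1,2) by simp
  have "Q [True, True, False] [True, False]" by (rule Q_sym[OF Q_base])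
  moreover have "Q [True, False] [False, True]" by (rule IH) (simp_all add: ok_def indep_def)
  ultimately have "Q [True, True, False] [False, True]" by (rule Q_trans)
  then have "Q [True, False] [False, False, True]" by (rule move_x[where u="[]", rotated 2]) (simp_all add: xw_def indep_def)
  then show ?thesis using assms(1,2) by simp
qed

lemma base_10_010:
  assumes "s1 = [False]" "t1 = [True, False]" and IH0: "\<And>s t. length s + length t < length (True # s1) + length (False # t1) \<Longrightarrow> ok s t \<Longrightarrow> Q s t"
  shows "Q (True # s1) (False # t1)"
proof -
  have IH: "Q s t" if "length s + length t < 5" "ok s t" for s t
    using IH0[of s t] that assms(1,2) by simp
  have "Q [False, False] [True, False]" by (rule IH) (simp_all add: ok_def indep_def)
  moreover have "Q [True, False] [True, True, False]" by (rule Q_base)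
  ultimately have "Q [False, False] [True, True, False]" by (rule Q_trans)
  then have "Q [True, False] [False, True, False]" by (rule move_p[rotated 2]) (simp_all add: pw_def)
  then show ?thesis using assms(1,2) by simp
qed

lemma base_11_0:
  assumes "s1 = [True]" "t1 = []" and IH0: "\<And>s t. length s + length t < length (True # s1) + length (False # t1) \<Longrightarrow> ok s t \<Longrightarrow> Q s t"
  shows "Q (True # s1) (False # t1)"
proof -
  have IH: "Q s t" if "length s + length t < 3" "ok s t" for s t
    using IH0[of s t] that assms(1,2) by simp
  have "Q [True, False] [True, True, False]" by (rule Q_base)
  then have "Q [False, True] [True, False]" by (rule move_x[where u="[]", rotated 2]) (simp_all add: xw_def indep_def)
  then have "Q [True, True] [False, False]" by (rule move_p[rotated 2]) (simp_all add: pw_def)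
  then have "Q [True, True, True] [False]" by (rule move_xi[where u="[]", rotated 2]) (simp_all add: xiw_def indep_def)
  then have "Q [True, True] [False]" by (rule move_x[where u="[True]", rotated 2]) (simp_all add: xw_def indep_def)
  then show ?thesis using assms(1,2) by simp
qed

lemma base_11_00:
  assumes "s1 = [True]" "t1 = [False]" and IH0: "\<And>s t. length s + length t < length (True # s1) + length (False # t1) \<Longrightarrow> ok s t \<Longrightarrow> Q s t"
  shows "Q (True # s1) (False # t1)"
proof -
  have IH: "Q s t" if "length s + length t < 4" "ok s t" for s t
    using IH0[of s t] that assms(1,2) by simp
  have "Q [True, False] [True, True, False]" by (rule Q_base)
  then have "Q [False, True] [True, False]" by (rule move_x[where u="[]", rotated 2]) (simp_all add: xw_def indep_def)
  then have "Q [True, True] [False, False]" by (rule move_p[rotated 2]) (simp_all add: pw_def)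
  then show ?thesis using assms(1,2) by simp
qed

lemma base_11_01:
  assumes "s1 = [True]" "t1 = [True]" and IH0: "\<And>s t. length s + length t < length (True # s1) + length (False # t1) \<Longrightarrow> ok s t \<Longrightarrow> Q s t"
  shows "Q (True # s1) (False # t1)"
proof -
  have IH: "Q s t" if "length s + length t < 4" "ok s t" for s t
    using IH0[of s t] that assms(1,2) by simp
  have "Q [False] [True, False]" by (rule IH) (simp_all add: ok_def indep_def)
  moreover have "Q [True, False] [True, True, False]" by (rule Q_base)
  ultimately have "Q [False] [True, True, False]" by (rule Q_trans)
  then have "Q [False] [True, False, True]" by (rule move_x[where u="[True]", rotated 2]) (simp_all add: xw_def indep_def)
  then have "Q [True] [False, False, True]" by (rule move_p[rotated 2]) (simp_all add: pw_def)
  then have "Q [True, True] [False, True]" by (rule move_xi[where u="[]", rotated 2]) (simp_all add: xiw_def indep_def)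
  then show ?thesis using assms(1,2) by simp
qed

lemma base_11_001:
  assumes "s1 = [True]" "t1 = [False, True]" and IH0: "\<And>s t. length s + length t < length (True # s1) + length (False # t1) \<Longrightarrow> ok s t \<Longrightarrow> Q s t"
  shows "Q (True # s1) (False # t1)"
proof -
  have IH: "Q s t" if "length s + length t < 5" "ok s t" for s t
    using IH0[of s t] that assms(1,2) by simp
  have "Q [False, False, True] [True]" by (rule IH) (simp_all add: ok_def indep_def)
  moreover have "Q [True] [False, True, True]" by (rule IH) (simp_all add: ok_def indep_def)
  ultimately have "Q [False, False, True] [False, True, True]" by (rule Q_trans)
  then have "Q [False, True] [True, False, True]" by (rule move_xi[where u="[]", rotated 2]) (simp_all add: xiw_def indep_def)
  then have "Q [True, True] [False, False, True]" by (rule move_p[rotated 2]) (simp_all add: pw_def)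
  then show ?thesis using assms(1,2) by simp
qed

lemma base_11_010:
  assumes "s1 = [True]" "t1 = [True, False]" and IH0: "\<And>s t. length s + length t < length (True # s1) + length (False # t1) \<Longrightarrow> ok s t \<Longrightarrow> Q s t"
  shows "Q (True # s1) (False # t1)"
proof -
  have IH: "Q s t" if "length s + length t < 5" "ok s t" for s t
    using IH0[of s t] that assms(1,2) by simp
  have "Q [False, True] [True, False]" by (rule IH) (simp_all add: ok_def indep_def)
  moreover have "Q [True, False] [True, True, False]" by (rule Q_base)
  ultimately have "Q [False, True] [True, True, False]" by (rule Q_trans)
  then have "Q [True, True] [False, True, False]" by (rule move_p[rotated 2]) (simp_all add: pw_def)
  then show ?thesis using assms(1,2) by simp
qed

lemma base_101_0:
  assumes "s1 = [False, True]" "t1 = []" and IH0: "\<And>s t. length s + length t < length (True # s1) + length (False # t1) \<Longrightarrow> ok s t \<Longrightarrow> Q s t"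
  shows "Q (True # s1) (False # t1)"
proof -
  have IH: "Q s t" if "length s + length t < 4" "ok s t" for s t
    using IH0[of s t] that assms(1,2) by simp
  have "Q [True, True, False] [True, False]" by (rule Q_sym[OF Q_base])
  moreover have "Q [True, False] [False]" by (rule IH) (simp_all add: ok_def indep_def)
  ultimately have "Q [True, True, False] [False]" by (rule Q_trans)
  then have "Q [True, False, True] [False]" by (rule move_x[where u="[True]", rotated 2]) (simp_all add: xw_def indep_def)
  then show ?thesis using assms(1,2) by simp
qed

lemma base_101_00:
  assumes "s1 = [False, True]" "t1 = [False]" and IH0: "\<And>s t. length s + length t < length (True # s1) + length (False # t1) \<Longrightarrow> ok s t \<Longrightarrow> Q s t"
  shows "Q (True # s1) (False # t1)"
proof -
  have IH: "Q s t" if "length s + length t < 5" "ok s t" for s t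
    using IH0[of s t] that assms(1,2) by simp
  have "Q [False, True, True] [True]" by (rule IH) (simp_all add: ok_def indep_def)
  moreover have "Q [True] [False, False, False]" by (rule IH) (simp_all add: ok_def indep_def)
  ultimately have "Q [False, True, True] [False, False, False]" by (rule Q_trans)
  then have "Q [True, False, True] [False, False]" by (rule move_xi[where u="[]", rotated 2]) (simp_all add: xiw_def indep_def)
  then show ?thesis using assms(1,2) by simp
qed

lemma base_101_01:
  assumes "s1 = [False, True]" "t1 = [True]" and IH0: "\<And>s t. length s + length t < length (True # s1) + length (False # t1) \<Longrightarrow> ok s t \<Longrightarrow> Q s t"
  shows "Q (True # s1) (False # t1)"
proof -
  have IH: "Q s t" if "length s + length t < 5" "ok s t" for s t
    using IH0[of s t] that assms(1,2) by simp
  have "Q [False, True, True] [True]" by (rule IH) (simp_all add: ok_def indep_def)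
  moreover have "Q [True] [False, False, True]" by (rule IH) (simp_all add: ok_def indep_def)
  ultimately have "Q [False, True, True] [False, False, True]" by (rule Q_trans)
  then have "Q [True, False, True] [False, True]" by (rule move_xi[where u="[]", rotated 2]) (simp_all add: xiw_def indep_def)
  then show ?thesis using assms(1,2) by simp
qed

lemma base_101_001:
  assumes "s1 = [False, True]" "t1 = [False, True]" and IH0: "\<And>s t. length s + length t < length (True # s1) + length (False # t1) \<Longrightarrow> ok s t \<Longrightarrow> Q s t"
  shows "Q (True # s1) (False # t1)"
proof -
  have IH: "Q s t" if "length s + length t < 6" "ok s t" for s t
    using IH0[of s t] that assms(1,2) by simp
  have "Q [True, False, True] [False, True]" by (rule IH) (simp_all add: ok_def indep_def)
  moreover have "Q [False, True] [False, False, True]" by (rule IH) (simp_all add: ok_def indep_def)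
  ultimately have "Q [True, False, True] [False, False, True]" by (rule Q_trans)
  then show ?thesis using assms(1,2) by simp
qed

lemma base_101_010:
  assumes "s1 = [False, True]" "t1 = [True, False]" and IH0: "\<And>s t. length s + length t < length (True # s1) + length (False # t1) \<Longrightarrow> ok s t \<Longrightarrow> Q s t"
  shows "Q (True # s1) (False # t1)"
proof -
  have IH: "Q s t" if "length s + length t < 6" "ok s t" for s t
    using IH0[of s t] that assms(1,2) by simp
  have "Q [True, False, True] [False, False]" by (rule IH) (simp_all add: ok_def indep_def)
  moreover have "Q [False, False] [False, True, False]" by (rule IH) (simp_all add: ok_def indep_def)
  ultimately have "Q [True, False, True] [False, True, False]" by (rule Q_trans)
  then show ?thesis using assms(1,2) by simp
qed

lemma base_110_0:
  assumes "s1 = [True, False]" "t1 = []" and IH0: "\<And>s t. length s + length t < length (True # s1) + length (False # t1) \<Longrightarrow> ok s t \<Longrightarrow> Q s t"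
  shows "Q (True # s1) (False # t1)"
proof -
  have IH: "Q s t" if "length s + length t < 4" "ok s t" for s t
    using IH0[of s t] that assms(1,2) by simp
  have "Q [True, True, False] [True, False]" by (rule Q_sym[OF Q_base])
  moreover have "Q [True, False] [False]" by (rule IH) (simp_all add: ok_def indep_def)
  ultimately have "Q [True, True, False] [False]" by (rule Q_trans)
  then show ?thesis using assms(1,2) by simp
qed

lemma base_110_00:
  assumes "s1 = [True, False]" "t1 = [False]" and IH0: "\<And>s t. length s + length t < length (True # s1) + length (False # t1) \<Longrightarrow> ok s t \<Longrightarrow> Q s t"
  shows "Q (True # s1) (False # t1)"
proof -
  have IH: "Q s t" if "length s + length t < 5" "ok s t" for s t
    using IH0[of s t] that assms(1,2) by simp
  have "Q [True, True, False] [True, False]" by (rule Q_sym[OF Q_base])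
  moreover have "Q [True, False] [False, False]" by (rule IH) (simp_all add: ok_def indep_def)
  ultimately have "Q [True, True, False] [False, False]" by (rule Q_trans)
  then show ?thesis using assms(1,2) by simp
qed

lemma base_110_01:
  assumes "s1 = [True, False]" "t1 = [True]" and IH0: "\<And>s t. length s + length t < length (True # s1) + length (False # t1) \<Longrightarrow> ok s t \<Longrightarrow> Q s t"
  shows "Q (True # s1) (False # t1)"
proof -
  have IH: "Q s t" if "length s + length t < 5" "ok s t" for s t
    using IH0[of s t] that assms(1,2) by simp
  have "Q [True, True, False] [True, False]" by (rule Q_sym[OF Q_base])
  moreover have "Q [True, False] [False, True]" by (rule IH) (simp_all add: ok_def indep_def)
  ultimately have "Q [True, True, False] [False, True]" by (rule Q_trans)
  then show ?thesis using assms(1,2) by simp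
qed

lemma base_110_001:
  assumes "s1 = [True, False]" "t1 = [False, True]" and IH0: "\<And>s t. length s + length t < length (True # s1) + length (False # t1) \<Longrightarrow> ok s t \<Longrightarrow> Q s t"
  shows "Q (True # s1) (False # t1)"
proof -
  have IH: "Q s t" if "length s + length t < 6" "ok s t" for s t
    using IH0[of s t] that assms(1,2) by simp
  have "Q [True, True, False] [False, True]" by (rule IH) (simp_all add: ok_def indep_def)
  moreover have "Q [False, True] [False, False, True]" by (rule IH) (simp_all add: ok_def indep_def)
  ultimately have "Q [True, True, False] [False, False, True]" by (rule Q_trans)
  then show ?thesis using assms(1,2) by simp
qed

lemma base_110_010:
  assumes "s1 = [True, False]" "t1 = [True, False]" and IH0: "\<And>s t. length s + length t < length (True # s1) + length (False # t1) \<Longrightarrow> ok s t \<Longrightarrow> Q s t"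
  shows "Q (True # s1) (False # t1)"
proof -
  have IH: "Q s t" if "length s + length t < 6" "ok s t" for s t
    using IH0[of s t] that assms(1,2) by simp
  have "Q [True, True, False] [False, False]" by (rule IH) (simp_all add: ok_def indep_def)
  moreover have "Q [False, False] [False, True, False]" by (rule IH) (simp_all add: ok_def indep_def)
  ultimately have "Q [True, True, False] [False, True, False]" by (rule Q_trans)
  then show ?thesis using assms(1,2) by simp
qed


lemma R_s:
  assumes IH: "\<And>s t. length s + length t < length (True # s1) + length (False # t1) \<Longrightarrow> ok s t \<Longrightarrow> Q s t"
    and nb: "s1 \<notin> {[], [False], [True], [False, True], [True, False]}"
  shows "Q (True # s1) (False # t1)"
proof -
  have "s1 \<noteq> []" using nb by auto
  then obtain a w where aw: "s1 = a # w" by (cases s1) auto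
  have "w \<noteq> []" using nb aw by (cases a) auto
  then obtain b z where bz: "w = b # z" by (cases w) auto
  have s1: "s1 = a # b # z" using aw bz by simp
  show ?thesis
  proof (cases "a = b")
    case True
    show ?thesis
    proof (cases a)
      case False
      have "Q (True # False # z) (False # t1)" by (rule IH) (auto simp: ok_def indep_def s1)
      then have "Q (True # False # False # z) (False # t1)"
        by (rule move_x[where u="[True]", rotated 2]) (simp_all add: xw_def indep_def)
      then show ?thesis using \<open>a = b\<close> False s1 by simp
    next
      case True
      have "Q (True # True # z) (False # t1)" by (rule IH) (auto simp: ok_def indep_def s1)
      then have "Q (True # True # True # z) (False # t1)"
        by (rule move_xi[where u="[True]", rotated 2]) (simp_all add: xiw_def indep_def)
      then show ?thesis using \<open>a = b\<close> True s1 by simp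
    qed
  next
    case False
    have "z \<noteq> []" using nb s1 False by (cases a; cases b) auto
    then obtain c z' where z: "z = c # z'" by (cases z) auto
    show ?thesis
    proof (cases "b = c")
      case True
      show ?thesis
      proof (cases b)
        case False
        have "Q (True # a # False # z') (False # t1)" by (rule IH) (auto simp: ok_def indep_def s1 z)
        then have "Q (True # a # False # False # z') (False # t1)"
          by (rule move_x[where u="[True, a]", rotated 2]) (simp_all add: xw_def indep_def)
        then show ?thesis using \<open>b = c\<close> False s1 z by simp
      next
        case True
        have "Q (True # a # True # z') (False # t1)" by (rule IH) (auto simp: ok_def indep_def s1 z)
        then have "Q (True # a # True # True # z') (False # t1)"
          by (rule move_xi[where u="[True, a]", rotated 2]) (simp_all add: xiw_def indep_def)
        then show ?thesis using \<open>b = c\<close> True s1 z by simp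
      qed
    next
      case False
      show ?thesis
      proof (cases a)
        case True
        then have e: "s1 = True # False # True # z'" using s1 z \<open>a \<noteq> b\<close> \<open>b \<noteq> c\<close> by auto
        have "Q (True # True # False # z') (False # t1)" by (rule IH) (auto simp: ok_def indep_def e)
        then have "Q (True # True # True # False # z') (False # t1)"
          by (rule move_xi[where u="[True]", rotated 2]) (simp_all add: xiw_def indep_def)
        then show ?thesis unfolding e
          by (rule move_x[where u="[True, True]", rotated 2]) (simp_all add: xw_def indep_def)
      next
        case False
        then have e: "s1 = False # True # False # z'" using s1 z \<open>a \<noteq> b\<close> \<open>b \<noteq> c\<close> by auto
        have "Q (True # False # True # z') (False # t1)" by (rule IH) (auto simp: ok_def indep_def e)
        then have "Q (True # False # False # True # z') (False # t1)"
          by (rule move_x[where u="[True]", rotated 2]) (simp_all add: xw_def indep_def)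
        then show ?thesis unfolding e
          by (rule move_xi[where u="[True, False]", rotated 2]) (simp_all add: xiw_def indep_def)
      qed
    qed
  qed
qed

lemma C_case:
  assumes IH: "\<And>s t. length s + length t < length (True # s1) + length (False # t1) \<Longrightarrow> ok s t \<Longrightarrow> Q s t"
    and ne: "\<not> (s1 = [] \<and> t1 = [])"
  shows "Q (True # s1) (False # t1)"
proof (cases "s1 \<in> {[], [False], [True], [False, True], [True, False]}")
  case False
  then show ?thesis using R_s[OF IH] by blast
next
  case s1B: True
  show ?thesis
  proof (cases "t1 \<in> {[], [False], [True], [False, True], [True, False]}")
    case False
    have "Q (True # t1) (False # s1)"
      by (rule R_s[OF _ False]) (rule IH, simp_all)
    then have "Q (False # s1) (True # t1)" by (rule Q_sym)
    then show ?thesis by (rule move_p[rotated 2]) (simp_all add: pw_def)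
  next
    case t1B: True
    have s1c: "s1 = [] \<or> s1 = [False] \<or> s1 = [True] \<or> s1 = [False, True] \<or> s1 = [True, False]" using s1B by simp
    have t1c: "t1 = [] \<or> t1 = [False] \<or> t1 = [True] \<or> t1 = [False, True] \<or> t1 = [True, False]" using t1B by simp
    from s1c show ?thesis
    proof (elim disjE)
      assume a1: "s1 = []"
      from t1c show ?thesis
      proof (elim disjE)
        assume "t1 = []" with a1 ne show ?thesis by simp
      next
        assume "t1 = [False]" with a1 show ?thesis by (rule base_1_00[OF _ _ IH])
      next
        assume "t1 = [True]" with a1 show ?thesis by (rule base_1_01[OF _ _ IH])
      next
        assume "t1 = [False, True]" with a1 show ?thesis by (rule base_1_001[OF _ _ IH])
      next
        assume "t1 = [True, False]" with a1 show ?thesis by (rule base_1_010[OF _ _ IH])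
      qed
    next
      assume a1: "s1 = [False]"
      from t1c show ?thesis
      proof (elim disjE)
        assume "t1 = []" with a1 show ?thesis by (rule base_10_0[OF _ _ IH])
      next
        assume "t1 = [False]" with a1 show ?thesis by (rule base_10_00[OF _ _ IH])
      next
        assume "t1 = [True]" with a1 show ?thesis by (rule base_10_01[OF _ _ IH])
      next
        assume "t1 = [False, True]" with a1 show ?thesis by (rule base_10_001[OF _ _ IH])
      next
        assume "t1 = [True, False]" with a1 show ?thesis by (rule base_10_010[OF _ _ IH])
      qed
    next
      assume a1: "s1 = [True]"
      from t1c show ?thesis
      proof (elim disjE)
        assume "t1 = []" with a1 show ?thesis by (rule base_11_0[OF _ _ IH])
      next
        assume "t1 = [False]" with a1 show ?thesis by (rule base_11_00[OF _ _ IH])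
      next
        assume "t1 = [True]" with a1 show ?thesis by (rule base_11_01[OF _ _ IH])
      next
        assume "t1 = [False, True]" with a1 show ?thesis by (rule base_11_001[OF _ _ IH])
      next
        assume "t1 = [True, False]" with a1 show ?thesis by (rule base_11_010[OF _ _ IH])
      qed
    next
      assume a1: "s1 = [False, True]"
      from t1c show ?thesis
      proof (elim disjE)
        assume "t1 = []" with a1 show ?thesis by (rule base_101_0[OF _ _ IH])
      next
        assume "t1 = [False]" with a1 show ?thesis by (rule base_101_00[OF _ _ IH])
      next
        assume "t1 = [True]" with a1 show ?thesis by (rule base_101_01[OF _ _ IH])
      next
        assume "t1 = [False, True]" with a1 show ?thesis by (rule base_101_001[OF _ _ IH])
      next
        assume "t1 = [True, False]" with a1 show ?thesis by (rule base_101_010[OF _ _ IH])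
      qed
    next
      assume a1: "s1 = [True, False]"
      from t1c show ?thesis
      proof (elim disjE)
        assume "t1 = []" with a1 show ?thesis by (rule base_110_0[OF _ _ IH])
      next
        assume "t1 = [False]" with a1 show ?thesis by (rule base_110_00[OF _ _ IH])
      next
        assume "t1 = [True]" with a1 show ?thesis by (rule base_110_01[OF _ _ IH])
      next
        assume "t1 = [False, True]" with a1 show ?thesis by (rule base_110_001[OF _ _ IH])
      next
        assume "t1 = [True, False]" with a1 show ?thesis by (rule base_110_010[OF _ _ IH])
      qed
    qed
  qed
qed

lemma G01:
  assumes IH: "\<And>s t. length s + length t < length (False # False # x) + length (False # True # y) \<Longrightarrow> ok s t \<Longrightarrow> Q s t"
  shows "Q (False # False # x) (False # True # y)"
proof -
  have "Q (False # x) (True # False # y)" by (rule IH) (auto simp: ok_def indep_def)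
  then show ?thesis by (rule move_x[where u="[]", rotated 2]) (simp_all add: xw_def indep_def)
qed

lemma G0:
  assumes IH: "\<And>s t. length s + length t < length (False # s1) + length (False # t1) \<Longrightarrow> ok s t \<Longrightarrow> Q s t"
    and ind: "indep (False # s1) (False # t1)"
  shows "Q (False # s1) (False # t1)"
proof -
  obtain a s2 b t2 where s1: "s1 = a # s2" and t1: "t1 = b # t2"
    using ind by (cases s1; cases t1) (auto simp: indep_def)
  have ind2: "indep s2 t2" if "a = b" using ind s1 t1 that by (auto simp: indep_def)
  show ?thesis
  proof (cases a; cases b)
    assume "a" "b"
    have i2: "indep s2 t2" using ind2 \<open>a\<close> \<open>b\<close> by auto
    have "Q (False # s2) (False # t2)" by (rule IH) (use i2 in \<open>auto simp: ok_def indep_def s1 t1\<close>)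
    then have "Q (False # False # s2) (False # False # t2)"
      by (rule move_x[where u="[]", rotated 2]) (simp_all add: xw_def indep_def)
    then have "Q (True # False # s2) (True # False # t2)"
      by (rule move_p[rotated 2]) (simp_all add: pw_def)
    then have "Q (False # True # s2) (False # True # t2)"
      by (rule move_x[where u="[]", rotated 2]) (simp_all add: xw_def indep_def)
    then show ?thesis using \<open>a\<close> \<open>b\<close> s1 t1 by simp
  next
    assume "a" "\<not> b"
    have "Q (False # False # t2) (False # True # s2)" by (rule G01) (rule IH, auto simp: s1 t1)
    then show ?thesis using \<open>a\<close> \<open>\<not> b\<close> s1 t1 by (simp add: Q_sym)
  next
    assume "\<not> a" "b"
    have "Q (False # False # s2) (False # True # t2)" by (rule G01) (rule IH, auto simp: s1 t1)
    then show ?thesis using \<open>\<not> a\<close> \<open>b\<close> s1 t1 by simp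
  next
    assume "\<not> a" "\<not> b"
    have i2: "indep s2 t2" using ind2 \<open>\<not> a\<close> \<open>\<not> b\<close> by auto
    have "Q (False # s2) (False # t2)" by (rule IH) (use i2 in \<open>auto simp: ok_def indep_def s1 t1\<close>)
    then have "Q (False # False # s2) (False # False # t2)"
      by (rule move_x[where u="[]", rotated 2]) (simp_all add: xw_def indep_def)
    then show ?thesis using \<open>\<not> a\<close> \<open>\<not> b\<close> s1 t1 by simp
  qed
qed

lemma step:
  assumes IH: "\<And>s' t'. length s' + length t' < length s + length t \<Longrightarrow> ok s' t' \<Longrightarrow> Q s' t'"
    and okst: "ok s t"
  shows "Q s t"
proof -
  obtain a s1 b t1 where s: "s = a # s1" and t: "t = b # t1"
    using okst by (cases s; cases t) (auto simp: ok_def indep_def)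
  have IH1: "Q s' t'" if "length s' + length t' < length (x # s1) + length (y # t1)" "ok s' t'" for s' t' x y
    using IH[of s' t'] that by (simp add: s t)
  have IH2: "Q s' t'" if "length s' + length t' < length (x # t1) + length (y # s1)" "ok s' t'" for s' t' x y
    using IH[of s' t'] that by (simp add: s t)
  have ind: "indep (a # s1) (b # t1)" using okst by (simp add: s t ok_def)
  show ?thesis
  proof (cases a; cases b)
    assume "a" "b"
    have "indep (False # s1) (False # t1)" using ind \<open>a\<close> \<open>b\<close> by (simp add: indep_def)
    then have "Q (False # s1) (False # t1)" by (intro G0) (auto intro: IH1)
    then have "Q (True # s1) (True # t1)" by (rule move_p[rotated 2]) (simp_all add: pw_def)
    then show ?thesis using \<open>a\<close> \<open>b\<close> s t by simp
  next
    assume "a" "\<not> b"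
    have ne: "\<not> (s1 = [] \<and> t1 = [])" using okst \<open>a\<close> \<open>\<not> b\<close> by (auto simp: s t ok_def)
    have "Q (True # s1) (False # t1)" by (rule C_case[OF IH1 ne])
    then show ?thesis using \<open>a\<close> \<open>\<not> b\<close> s t by simp
  next
    assume "\<not> a" "b"
    have ne: "\<not> (t1 = [] \<and> s1 = [])" using okst \<open>\<not> a\<close> \<open>b\<close> by (auto simp: s t ok_def)
    have "Q (True # t1) (False # s1)" by (rule C_case[OF IH2 ne])
    then show ?thesis using \<open>\<not> a\<close> \<open>b\<close> s t by (simp add: Q_sym)
  next
    assume "\<not> a" "\<not> b"
    have "indep (False # s1) (False # t1)" using ind \<open>\<not> a\<close> \<open>\<not> b\<close> by (simp add: indep_def)
    then have "Q (False # s1) (False # t1)" by (intro G0) (auto intro: IH1)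
    then show ?thesis using \<open>\<not> a\<close> \<open>\<not> b\<close> s t by simp
  qed
qed

lemma mainQ: "ok s t \<Longrightarrow> Q s t"
proof (induction "length s + length t" arbitrary: s t rule: less_induct)
  case less
  show ?case by (rule step) (use less in auto)
qed

theorem lemma6p7:
  fixes s t :: "bool list"
  assumes "independent s t"
  shows "inv (y_at t) \<circ> y_at s \<in> S_group"
proof -
  have ind: "indep s t" using assms by (simp add: independent_def indep_def)
  have q01: "Q [False] [True]"
    by (rule Q01; rule mainQ; simp add: ok_def indep_def)
  have "Q s t"
  proof (cases "ok s t")
    case True then show ?thesis by (rule mainQ)
  next
    case False
    then have "(s = [False] \<and> t = [True]) \<or> (s = [True] \<and> t = [False])" using ind by (simp add: ok_def)
    then show ?thesis using q01 Q_sym by blast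
  qed
  then show ?thesis by (simp add: Q_iff)
qed

end
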